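(* Let $(X,Y)$ be a random pair with $X\in\mathbb{R}^p$, $Y\in\mathbb{R}^q$ and $(X_1,Y_1),\ldots,(X_4,Y_4)$ i.i.d. copies of it. If $\mathbb{E}[|X|^2]<\infty$, $\mathbb{E}[|Y|^2]<\infty$ and $\mathbb{E}[|X|^2|Y|^2]<\infty$, then $\mathrm{Var}(h_4)<\infty$, where $h_4=h_4((X_1,Y_1),\ldots,(X_4,Y_4))$. Consequently $\mathrm{Var}(h_1)<\infty$ and $\mathrm{Var}(h_2)<\infty$.
   Context: $|\cdot|$ Euclidean norm. The kernel $h_4$ is $$h_4((X_1,Y_1),\ldots,(X_4,Y_4))=\frac14\sum_{1\le i,j\le4,i\ne j}|X_i-X_j||Y_i-Y_j|-\frac14\sum_{i=1}^4\Big(\sum_{j\ne i}|X_i-X_j|\Big)\Big(\sum_{j\ne i}|Y_i-Y_j|\Big)+\frac1{24}\Big(\sum_{i\ne j}|X_i-X_j|\Big)\Big(\sum_{i\ne j}|Y_i-Y_j|\Big).$$ $h_1((X_1,Y_1))=\mathbb{E}_{2,3,4}[h_4]$ (expectation over $(X_2,Y_2),(X_3,Y_3),(X_4,Y_4)$) and $h_2((X_1,Y_1),(X_2,Y_2))=\mathbb{E}_{3,4}[h_4]$ (expectation over $(X_3,Y_3),(X_4,Y_4)$). *)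

theory Defs
  imports "HOL-Probability.Probability"
begin

text \<open>The kernel h4 evaluated on an indexed family Z of four pairs (X_i, Y_i),
  indices i = 0..3 (representing 1..4).\<close>
definition h4_fam :: "(nat \<Rightarrow> ('a::euclidean_space \<times> 'b::euclidean_space)) \<Rightarrow> real" where
  "h4_fam Z =
     (let dX = (\<lambda>i j. norm (fst (Z i) - fst (Z j)));
          dY = (\<lambda>i j. norm (snd (Z i) - snd (Z j)));
          I = {0..<4::nat}
      in (1/4) * (\<Sum>i\<in>I. \<Sum>j\<in>I - {i}. dX i j * dY i j)
         - (1/4) * (\<Sum>i\<in>I. (\<Sum>j\<in>I - {i}. dX i j) * (\<Sum>j\<in>I - {i}. dY i j))
         + (1/24) * (\<Sum>i\<in>I. \<Sum>j\<in>I - {i}. dX i j) * (\<Sum>i\<in>I. \<Sum>j\<in>I - {i}. dY i j))"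

definition h4 :: "('a::euclidean_space \<times> 'b::euclidean_space) \<Rightarrow> ('a \<times> 'b) \<Rightarrow> ('a \<times> 'b) \<Rightarrow> ('a \<times> 'b) \<Rightarrow> real" where
  "h4 z1 z2 z3 z4 = h4_fam (\<lambda>i. [z1, z2, z3, z4] ! i)"

text \<open>h1 and h2: conditional expectations of h4 given the first one / two arguments,
  where the remaining arguments are independent with law mu.\<close>
definition h1 :: "('a::euclidean_space \<times> 'b::euclidean_space) measure \<Rightarrow> ('a \<times> 'b) \<Rightarrow> real" where
  "h1 mu z1 = (\<integral>w. h4 z1 (fst w) (fst (snd w)) (snd (snd w)) \<partial>(mu \<Otimes>\<^sub>M (mu \<Otimes>\<^sub>M mu)))"

definition h2 :: "('a::euclidean_space \<times> 'b::euclidean_space) measure \<Rightarrow> ('a \<times> 'b) \<Rightarrow> ('a \<times> 'b) \<Rightarrow> real" where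
  "h2 mu z1 z2 = (\<integral>w. h4 z1 z2 (fst w) (snd w) \<partial>(mu \<Otimes>\<^sub>M mu))"

definition finite_variance :: "'c measure \<Rightarrow> ('c \<Rightarrow> real) \<Rightarrow> bool" where
  "finite_variance M f \<longleftrightarrow> integrable M f \<and> integrable M (\<lambda>x. (f x)\<^sup>2)"

end

theory Submission
  imports Defs
begin

lemma card3: "i \<in> {0..<4::nat} \<Longrightarrow> card ({0..<4::nat} - {i}) = 3"
  by (simp add: card_Diff_singleton)

lemma h4_fam_bound:
  fixes Z :: "nat \<Rightarrow> ('a::euclidean_space \<times> 'b::euclidean_space)"
  defines "A \<equiv> (\<Sum>i<4. norm (fst (Z i)))" and "B \<equiv> (\<Sum>i<4. norm (snd (Z i)))"
  shows "\<bar>h4_fam Z\<bar> \<le> 18 * A * B"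
proof -
  define dX where "dX = (\<lambda>i j. norm (fst (Z i) - fst (Z j)))"
  define dY where "dY = (\<lambda>i j. norm (snd (Z i) - snd (Z j)))"
  define I where "I = {0..<4::nat}"
  have IA: "{..<4::nat} = I" unfolding I_def by auto
  have fI: "finite I" and fD: "\<And>i. finite (I - {i})" unfolding I_def by auto
  have cD: "\<And>i. i \<in> I \<Longrightarrow> card (I - {i}) = 3" unfolding I_def by (rule card3)
  have cI: "card I = 4" unfolding I_def by simp
  have A0: "0 \<le> A" "0 \<le> B" unfolding A_def B_def by (auto intro: sum_nonneg)
  have dXA: "dX i j \<le> A" if "i \<in> I" "j \<in> I" for i j
  proof (cases "i = j")
    case True then show ?thesis using A0 by (simp add: dX_def)
  next
    case False
    have "dX i j \<le> norm (fst (Z i)) + norm (fst (Z j))" unfolding dX_def by (rule norm_triangle_ineq4)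
    also have "\<dots> = (\<Sum>k\<in>{i,j}. norm (fst (Z k)))" using False by simp
    also have "\<dots> \<le> (\<Sum>k\<in>I. norm (fst (Z k)))" using that fI by (intro sum_mono2) auto
    finally show ?thesis unfolding A_def IA .
  qed
  have dYB: "dY i j \<le> B" if "i \<in> I" "j \<in> I" for i j
  proof (cases "i = j")
    case True then show ?thesis using A0 by (simp add: dY_def)
  next
    case False
    have "dY i j \<le> norm (snd (Z i)) + norm (snd (Z j))" unfolding dY_def by (rule norm_triangle_ineq4)
    also have "\<dots> = (\<Sum>k\<in>{i,j}. norm (snd (Z k)))" using False by simp
    also have "\<dots> \<le> (\<Sum>k\<in>I. norm (snd (Z k)))" using that fI by (intro sum_mono2) auto
    finally show ?thesis unfolding B_def IA .
  qed
  have dX0: "0 \<le> dX i j" and dY0: "0 \<le> dY i j" for i j by (auto simp: dX_def dY_def)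
  define T1 where "T1 = (\<Sum>i\<in>I. \<Sum>j\<in>I - {i}. dX i j * dY i j)"
  define T2 where "T2 = (\<Sum>i\<in>I. (\<Sum>j\<in>I - {i}. dX i j) * (\<Sum>j\<in>I - {i}. dY i j))"
  define SX where "SX = (\<Sum>i\<in>I. \<Sum>j\<in>I - {i}. dX i j)"
  define SY where "SY = (\<Sum>i\<in>I. \<Sum>j\<in>I - {i}. dY i j)"
  have h: "h4_fam Z = (1/4) * T1 - (1/4) * T2 + (1/24) * SX * SY"
    unfolding h4_fam_def Let_def T1_def T2_def SX_def SY_def dX_def dY_def I_def by simp
  have T10: "0 \<le> T1" unfolding T1_def using dX0 dY0 by (intro sum_nonneg mult_nonneg_nonneg) auto
  have T20: "0 \<le> T2" unfolding T2_def using dX0 dY0 by (intro sum_nonneg mult_nonneg_nonneg) auto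
  have SX0: "0 \<le> SX" unfolding SX_def using dX0 by (intro sum_nonneg) auto
  have SY0: "0 \<le> SY" unfolding SY_def using dY0 by (intro sum_nonneg) auto
  have inX: "(\<Sum>j\<in>I - {i}. dX i j) \<le> 3 * A" if "i \<in> I" for i
  proof -
    have "(\<Sum>j\<in>I - {i}. dX i j) \<le> of_nat (card (I - {i})) * A"
      using that dXA by (intro sum_bounded_above) auto
    then show ?thesis using cD[OF that] by simp
  qed
  have inY: "(\<Sum>j\<in>I - {i}. dY i j) \<le> 3 * B" if "i \<in> I" for i
  proof -
    have "(\<Sum>j\<in>I - {i}. dY i j) \<le> of_nat (card (I - {i})) * B"
      using that dYB by (intro sum_bounded_above) auto
    then show ?thesis using cD[OF that] by simp
  qed
  have inXY: "(\<Sum>j\<in>I - {i}. dX i j * dY i j) \<le> 3 * (A * B)" if "i \<in> I" for i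
  proof -
    have "(\<Sum>j\<in>I - {i}. dX i j * dY i j) \<le> of_nat (card (I - {i})) * (A * B)"
      using that dXA dYB dX0 dY0 A0 by (intro sum_bounded_above mult_mono) auto
    then show ?thesis using cD[OF that] by simp
  qed
  have "T1 \<le> of_nat (card I) * (3 * (A * B))" unfolding T1_def using inXY by (intro sum_bounded_above) auto
  then have T1b: "T1 \<le> 12 * (A * B)" using cI by simp
  have "T2 \<le> of_nat (card I) * ((3 * A) * (3 * B))" unfolding T2_def
    using inX inY A0 by (intro sum_bounded_above mult_mono) (auto intro: sum_nonneg dY0)
  then have T2b: "T2 \<le> 36 * (A * B)" using cI by simp
  have "SX \<le> of_nat (card I) * (3 * A)" unfolding SX_def using inX by (intro sum_bounded_above) auto
  then have SXb: "SX \<le> 12 * A" using cI by simp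
  have "SY \<le> of_nat (card I) * (3 * B)" unfolding SY_def using inY by (intro sum_bounded_above) auto
  then have SYb: "SY \<le> 12 * B" using cI by simp
  have "SX * SY \<le> (12 * A) * (12 * B)" using SXb SYb SX0 SY0 A0 by (intro mult_mono) auto
  then have Qb: "SX * SY \<le> 144 * (A * B)" by (simp add: algebra_simps)
  have Q0: "0 \<le> SX * SY" using SX0 SY0 by simp
  have P0: "0 \<le> A * B" using A0 by simp
  have e: "18 * A * B = 18 * (A * B)" by simp
  have h': "h4_fam Z = (1/4) * T1 - (1/4) * T2 + (1/24) * (SX * SY)" using h by simp
  show ?thesis unfolding h' e abs_le_iff using T10 T20 T1b T2b Qb Q0 P0 by linarith
qed

definition vv :: "('a::euclidean_space \<times> 'b::euclidean_space) \<Rightarrow> real" where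
  "vv z = (1 + norm (fst z)) * (1 + norm (snd z))"

lemma vv_ge1: "1 \<le> vv z"
proof -
  have "1 * 1 \<le> (1 + norm (fst z)) * (1 + norm (snd z))" by (intro mult_mono) auto
  then show ?thesis unfolding vv_def by simp
qed

lemma sum4_le: fixes a b c d :: real
  assumes "0 \<le> a" "0 \<le> b" "0 \<le> c" "0 \<le> d"
  shows "a + b + c + d \<le> (1 + a) * (1 + b) * (1 + c) * (1 + d)"
proof -
  have s: "\<And>x s e::real. 1 + s \<le> x \<Longrightarrow> 0 \<le> s \<Longrightarrow> 0 \<le> e \<Longrightarrow> 1 + s + e \<le> x * (1 + e)"
  proof -
    fix x s e :: real assume h: "1 + s \<le> x" "0 \<le> s" "0 \<le> e"
    have "(1 + s) * (1 + e) \<le> x * (1 + e)" using h by (intro mult_right_mono) auto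
    moreover have "1 + s + e \<le> (1 + s) * (1 + e)" using h by (simp add: algebra_simps)
    ultimately show "1 + s + e \<le> x * (1 + e)" by linarith
  qed
  have "1 + a + b \<le> (1 + a) * (1 + b)" using s[of 0 "1+a" b] s[of a "1 + a" b] assms by simp
  then have "1 + (a + b) + c \<le> (1 + a) * (1 + b) * (1 + c)" using s[of "a+b"] assms by (simp add: add.assoc)
  then have "1 + (a + b + c) + d \<le> (1 + a) * (1 + b) * (1 + c) * (1 + d)" using s[of "a+b+c"] assms by (simp add: add.assoc)
  then show ?thesis by linarith
qed

lemma h4_bound:
  "\<bar>h4 z1 z2 z3 z4\<bar> \<le> 18 * (vv z1 * vv z2 * vv z3 * vv z4)"
proof -
  let ?Z = "\<lambda>i. [z1, z2, z3, z4] ! i"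
  have A: "(\<Sum>i<4. norm (fst (?Z i))) = norm (fst z1) + norm (fst z2) + norm (fst z3) + norm (fst z4)"
    by (simp add: eval_nat_numeral)
  have B: "(\<Sum>i<4. norm (snd (?Z i))) = norm (snd z1) + norm (snd z2) + norm (snd z3) + norm (snd z4)"
    by (simp add: eval_nat_numeral)
  define PA where "PA = (1 + norm (fst z1)) * (1 + norm (fst z2)) * (1 + norm (fst z3)) * (1 + norm (fst z4))"
  define PB where "PB = (1 + norm (snd z1)) * (1 + norm (snd z2)) * (1 + norm (snd z3)) * (1 + norm (snd z4))"
  have hA: "(\<Sum>i<4. norm (fst (?Z i))) \<le> PA" unfolding A PA_def by (rule sum4_le) auto
  have hB: "(\<Sum>i<4. norm (snd (?Z i))) \<le> PB" unfolding B PB_def by (rule sum4_le) auto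
  have hA0: "0 \<le> (\<Sum>i<4. norm (fst (?Z i)))" by (intro sum_nonneg) auto
  have hB0: "0 \<le> (\<Sum>i<4. norm (snd (?Z i)))" by (intro sum_nonneg) auto
  have AB: "(\<Sum>i<4. norm (fst (?Z i))) * (\<Sum>i<4. norm (snd (?Z i))) \<le> PA * PB"
    by (rule mult_mono[OF hA hB]) (use hA0 hB0 hA in linarith)+
  have "\<bar>h4 z1 z2 z3 z4\<bar> \<le> 18 * (\<Sum>i<4. norm (fst (?Z i))) * (\<Sum>i<4. norm (snd (?Z i)))"
    unfolding h4_def by (rule h4_fam_bound)
  also have "\<dots> \<le> 18 * PA * PB" using AB by (simp add: mult.assoc)
  also have "\<dots> = 18 * (vv z1 * vv z2 * vv z3 * vv z4)" unfolding vv_def PA_def PB_def by (simp add: algebra_simps)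
  finally show ?thesis .
qed

lemma fst_meas[measurable (raw)]: "f \<in> borel_measurable M \<Longrightarrow> (\<lambda>w. fst (f w)) \<in> borel_measurable M"
  by (rule borel_measurable_continuous_on[where f=fst]) (auto intro: continuous_intros)
lemma snd_meas[measurable (raw)]: "f \<in> borel_measurable M \<Longrightarrow> (\<lambda>w. snd (f w)) \<in> borel_measurable M"
  by (rule borel_measurable_continuous_on[where f=snd]) (auto intro: continuous_intros)

lemma normdiff_meas:
  fixes f :: "'c \<Rightarrow> 'a::euclidean_space"
  assumes "f \<in> borel_measurable M" "g \<in> borel_measurable M"
  shows "(\<lambda>w. norm (f w - g w)) \<in> borel_measurable M"
  by (rule borel_measurable_continuous_on[where f=norm]) (auto intro: continuous_intros assms borel_measurable_diff)

lemma nth4_meas: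
  fixes f1 :: "'c \<Rightarrow> ('a::euclidean_space \<times> 'b::euclidean_space)"
  assumes "f1 \<in> borel_measurable M" "f2 \<in> borel_measurable M" "f3 \<in> borel_measurable M" "f4 \<in> borel_measurable M"
  shows "(\<lambda>w. [f1 w, f2 w, f3 w, f4 w] ! i) \<in> borel_measurable M"
proof -
  consider "i = 0" | "i = 1" | "i = 2" | "i = 3" | k where "i = Suc (Suc (Suc (Suc k)))"
    by (metis One_nat_def Suc_1 numeral_3_eq_3 not0_implies_Suc)
  then show ?thesis
  proof cases
    case 1 then show ?thesis using assms(1) by simp
  next
    case 2 then show ?thesis using assms(2) by simp
  next
    case 3 then show ?thesis using assms(3) by (simp add: numeral_2_eq_2)
  next
    case 4 then show ?thesis using assms(4) by (simp add: numeral_3_eq_3)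
  next
    case 5 then show ?thesis by simp
  qed
qed

lemma h4_meas:
  fixes f1 :: "'c \<Rightarrow> ('a::euclidean_space \<times> 'b::euclidean_space)"
  assumes "f1 \<in> borel_measurable M" "f2 \<in> borel_measurable M" "f3 \<in> borel_measurable M" "f4 \<in> borel_measurable M"
  shows "(\<lambda>w. h4 (f1 w) (f2 w) (f3 w) (f4 w)) \<in> borel_measurable M"
proof -
  note nm = nth4_meas[OF assms]
  show ?thesis unfolding h4_def h4_fam_def Let_def
    by (intro borel_measurable_add borel_measurable_diff borel_measurable_times borel_measurable_sum
        borel_measurable_const normdiff_meas fst_meas snd_meas nm)
qed

lemma fv_bound:
  fixes f g :: "'c \<Rightarrow> real"
  assumes fm: "f \<in> borel_measurable M" and ig: "integrable M g" and ig2: "integrable M (\<lambda>x. (g x)\<^sup>2)"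
    and b: "\<And>x. x \<in> space M \<Longrightarrow> \<bar>f x\<bar> \<le> c * g x" and c: "0 \<le> c"
  shows "finite_variance M f"
  unfolding finite_variance_def
proof
  show "integrable M f"
  proof (rule Bochner_Integration.integrable_bound[OF integrable_mult_right[OF ig, of c] fm])
    show "AE x in M. norm (f x) \<le> norm (c * g x)"
    proof (intro AE_I2)
      fix x assume x: "x \<in> space M"
      have "\<bar>f x\<bar> \<le> c * g x" by (rule b[OF x])
      also have "\<dots> \<le> \<bar>c * g x\<bar>" by (rule abs_ge_self)
      finally show "norm (f x) \<le> norm (c * g x)" by simp
    qed
  qed
  show "integrable M (\<lambda>x. (f x)\<^sup>2)"
  proof (rule Bochner_Integration.integrable_bound[OF integrable_mult_right[OF ig2, of "c^2"]])
    show "(\<lambda>x. (f x)\<^sup>2) \<in> borel_measurable M" using fm by measurable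
    show "AE x in M. norm ((f x)\<^sup>2) \<le> norm (c^2 * (g x)\<^sup>2)"
    proof (intro AE_I2)
      fix x assume x: "x \<in> space M"
      have "(f x)\<^sup>2 = \<bar>f x\<bar>\<^sup>2" by simp
      also have "\<dots> \<le> (c * g x)\<^sup>2" using b[OF x] by (intro power_mono) auto
      also have "\<dots> = c^2 * (g x)\<^sup>2" by (simp add: power_mult_distrib)
      finally show "norm ((f x)\<^sup>2) \<le> norm (c^2 * (g x)\<^sup>2)" by simp
    qed
  qed
qed

lemma int_prod:
  fixes f :: "'c \<Rightarrow> real" and g :: "'d \<Rightarrow> real"
  assumes "prob_space M" "prob_space N" "integrable M f" "integrable N g"
  shows "integrable (M \<Otimes>\<^sub>M N) (\<lambda>w. f (fst w) * g (snd w))"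
proof -
  interpret pair_sigma_finite M N
    using assms(1,2) by (simp add: pair_sigma_finite_def prob_space_imp_sigma_finite)
  have [measurable]: "f \<in> borel_measurable M" "g \<in> borel_measurable N" using assms(3,4) by auto
  show ?thesis
  proof (rule Fubini_integrable)
    show "(\<lambda>w. f (fst w) * g (snd w)) \<in> borel_measurable (M \<Otimes>\<^sub>M N)" by measurable
    have "(\<lambda>x. \<integral>y. norm (f (fst (x,y)) * g (snd (x,y))) \<partial>N) = (\<lambda>x. \<bar>f x\<bar> * (\<integral>y. \<bar>g y\<bar> \<partial>N))"
      by (simp add: abs_mult)
    then show "integrable M (\<lambda>x. \<integral>y. norm (f (fst (x,y)) * g (snd (x,y))) \<partial>N)"
      using assms(3) by simp
    show "AE x in M. integrable N (\<lambda>y. f (fst (x,y)) * g (snd (x,y)))" using assms(4) by simp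
  qed
qed

lemma vv_nonneg: "0 \<le> vv z" using vv_ge1[of z] by simp

theorem lemma4p8:
  fixes mu :: "('a::euclidean_space \<times> 'b::euclidean_space) measure"
  assumes "prob_space mu"
    and "sets mu = sets borel"
    and "integrable mu (\<lambda>(x, y). (norm x)\<^sup>2)"
    and "integrable mu (\<lambda>(x, y). (norm y)\<^sup>2)"
    and "integrable mu (\<lambda>(x, y). (norm x)\<^sup>2 * (norm y)\<^sup>2)"
  shows "finite_variance (mu \<Otimes>\<^sub>M (mu \<Otimes>\<^sub>M (mu \<Otimes>\<^sub>M mu)))
           (\<lambda>w. h4 (fst w) (fst (snd w)) (fst (snd (snd w))) (snd (snd (snd w))))
         \<and> finite_variance mu (h1 mu)
         \<and> finite_variance (mu \<Otimes>\<^sub>M mu) (\<lambda>w. h2 mu (fst w) (snd w))"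
proof -
  interpret mu: prob_space mu by fact
  have P1: "prob_space mu" by fact
  have P2: "prob_space (mu \<Otimes>\<^sub>M mu)" by (intro prob_space_pair P1)
  have P3: "prob_space (mu \<Otimes>\<^sub>M (mu \<Otimes>\<^sub>M mu))" by (intro prob_space_pair P1 P2)
  have P4: "prob_space (mu \<Otimes>\<^sub>M (mu \<Otimes>\<^sub>M (mu \<Otimes>\<^sub>M mu)))" by (intro prob_space_pair P1 P3)
  have mm: "\<And>f (M :: 'c measure). f \<in> measurable M mu \<Longrightarrow> f \<in> borel_measurable M"
    by (simp add: measurable_cong_sets[OF refl assms(2)])
  have "vv \<in> borel_measurable (borel :: ('a \<times> 'b) measure)"
    unfolding vv_def by (intro borel_measurable_continuous_onI continuous_intros)
  then have vm: "vv \<in> borel_measurable mu" by (simp add: measurable_cong_sets[OF assms(2) refl])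
  have i3: "integrable mu (\<lambda>z. (norm (fst z))\<^sup>2)" using assms(3) by (simp add: split_beta')
  have i4: "integrable mu (\<lambda>z. (norm (snd z))\<^sup>2)" using assms(4) by (simp add: split_beta')
  have i5: "integrable mu (\<lambda>z. (norm (fst z))\<^sup>2 * (norm (snd z))\<^sup>2)" using assms(5) by (simp add: split_beta')
  have iu: "integrable mu (\<lambda>z. 4 * (1 + (norm (fst z))\<^sup>2 + (norm (snd z))\<^sup>2 + (norm (fst z))\<^sup>2 * (norm (snd z))\<^sup>2))"
    using i3 i4 i5 by simp
  have sq: "(1 + t)\<^sup>2 \<le> 2 * (1 + t\<^sup>2)" for t :: real
    using sum_squares_ge_zero[of "1 - t" 0] by (simp add: power2_eq_square algebra_simps)
  have vv2b: "(vv z)\<^sup>2 \<le> 4 * (1 + (norm (fst z))\<^sup>2 + (norm (snd z))\<^sup>2 + (norm (fst z))\<^sup>2 * (norm (snd z))\<^sup>2)" for z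
  proof -
    have "(vv z)\<^sup>2 = (1 + norm (fst z))\<^sup>2 * (1 + norm (snd z))\<^sup>2" unfolding vv_def by (simp add: power_mult_distrib)
    also have "\<dots> \<le> (2 * (1 + (norm (fst z))\<^sup>2)) * (2 * (1 + (norm (snd z))\<^sup>2))"
      by (intro mult_mono sq) auto
    also have "\<dots> = 4 * (1 + (norm (fst z))\<^sup>2 + (norm (snd z))\<^sup>2 + (norm (fst z))\<^sup>2 * (norm (snd z))\<^sup>2)"
      by (simp add: algebra_simps)
    finally show ?thesis .
  qed
  have ivv2: "integrable mu (\<lambda>z. (vv z)\<^sup>2)"
  proof (rule Bochner_Integration.integrable_bound[OF iu])
    show "(\<lambda>z. (vv z)\<^sup>2) \<in> borel_measurable mu" using vm by measurable
    show "AE z in mu. norm ((vv z)\<^sup>2) \<le> norm (4 * (1 + (norm (fst z))\<^sup>2 + (norm (snd z))\<^sup>2 + (norm (fst z))\<^sup>2 * (norm (snd z))\<^sup>2))"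
    proof (intro AE_I2)
      fix z
      have "(vv z)\<^sup>2 \<le> 4 * (1 + (norm (fst z))\<^sup>2 + (norm (snd z))\<^sup>2 + (norm (fst z))\<^sup>2 * (norm (snd z))\<^sup>2)" by (rule vv2b)
      also have "\<dots> \<le> \<bar>4 * (1 + (norm (fst z))\<^sup>2 + (norm (snd z))\<^sup>2 + (norm (fst z))\<^sup>2 * (norm (snd z))\<^sup>2)\<bar>" by (rule abs_ge_self)
      finally show "norm ((vv z)\<^sup>2) \<le> norm (4 * (1 + (norm (fst z))\<^sup>2 + (norm (snd z))\<^sup>2 + (norm (fst z))\<^sup>2 * (norm (snd z))\<^sup>2))" by simp
    qed
  qed
  have ivv: "integrable mu vv"
  proof (rule Bochner_Integration.integrable_bound[OF ivv2 vm])
    show "AE x in mu. norm (vv x) \<le> norm ((vv x)\<^sup>2)"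
    proof (intro AE_I2)
      fix x
      have "vv x * 1 \<le> vv x * vv x" using vv_ge1[of x] by (intro mult_left_mono) auto
      then show "norm (vv x) \<le> norm ((vv x)\<^sup>2)" using vv_ge1[of x] by (simp add: power2_eq_square)
    qed
  qed
  have iV2: "integrable (mu \<Otimes>\<^sub>M mu) (\<lambda>w. vv (fst w) * vv (snd w))"
    by (rule int_prod[OF P1 P1 ivv ivv])
  have iV2s: "integrable (mu \<Otimes>\<^sub>M mu) (\<lambda>w. (vv (fst w))\<^sup>2 * (vv (snd w))\<^sup>2)"
    by (rule int_prod[OF P1 P1 ivv2 ivv2])
  have iV3: "integrable (mu \<Otimes>\<^sub>M (mu \<Otimes>\<^sub>M mu)) (\<lambda>w. vv (fst w) * (vv (fst (snd w)) * vv (snd (snd w))))"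
    using int_prod[OF P1 P2 ivv iV2] by simp
  have iV3s: "integrable (mu \<Otimes>\<^sub>M (mu \<Otimes>\<^sub>M mu)) (\<lambda>w. (vv (fst w))\<^sup>2 * ((vv (fst (snd w)))\<^sup>2 * (vv (snd (snd w)))\<^sup>2))"
    using int_prod[OF P1 P2 ivv2 iV2s] by simp
  have iV4: "integrable (mu \<Otimes>\<^sub>M (mu \<Otimes>\<^sub>M (mu \<Otimes>\<^sub>M mu)))
      (\<lambda>w. vv (fst w) * (vv (fst (snd w)) * (vv (fst (snd (snd w))) * vv (snd (snd (snd w))))))"
    using int_prod[OF P1 P3 ivv iV3] by simp
  have iV4s: "integrable (mu \<Otimes>\<^sub>M (mu \<Otimes>\<^sub>M (mu \<Otimes>\<^sub>M mu)))
      (\<lambda>w. (vv (fst w))\<^sup>2 * ((vv (fst (snd w)))\<^sup>2 * ((vv (fst (snd (snd w))))\<^sup>2 * (vv (snd (snd (snd w))))\<^sup>2)))"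
    using int_prod[OF P1 P3 ivv2 iV3s] by simp

  have A: "finite_variance (mu \<Otimes>\<^sub>M (mu \<Otimes>\<^sub>M (mu \<Otimes>\<^sub>M mu)))
           (\<lambda>w. h4 (fst w) (fst (snd w)) (fst (snd (snd w))) (snd (snd (snd w))))"
  proof (rule fv_bound[OF _ iV4, of _ 18])
    show "(\<lambda>w. h4 (fst w) (fst (snd w)) (fst (snd (snd w))) (snd (snd (snd w))))
      \<in> borel_measurable (mu \<Otimes>\<^sub>M (mu \<Otimes>\<^sub>M (mu \<Otimes>\<^sub>M mu)))"
      by (rule h4_meas; rule mm; measurable)
    show "integrable (mu \<Otimes>\<^sub>M (mu \<Otimes>\<^sub>M (mu \<Otimes>\<^sub>M mu)))
      (\<lambda>w. (vv (fst w) * (vv (fst (snd w)) * (vv (fst (snd (snd w))) * vv (snd (snd (snd w))))))\<^sup>2)"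
      using iV4s by (simp add: power_mult_distrib)
    show "\<bar>h4 (fst w) (fst (snd w)) (fst (snd (snd w))) (snd (snd (snd w)))\<bar>
      \<le> 18 * (vv (fst w) * (vv (fst (snd w)) * (vv (fst (snd (snd w))) * vv (snd (snd (snd w))))))" for w
      using h4_bound[of "fst w" "fst (snd w)" "fst (snd (snd w))" "snd (snd (snd w))"] by (simp add: mult.assoc)
  qed simp

  define K3 where "K3 = (\<integral>w. vv (fst w) * (vv (fst (snd w)) * vv (snd (snd w))) \<partial>(mu \<Otimes>\<^sub>M (mu \<Otimes>\<^sub>M mu)))"
  have K3: "0 \<le> K3" unfolding K3_def by (intro integral_nonneg_AE AE_I2 mult_nonneg_nonneg vv_nonneg)
  have B: "finite_variance mu (h1 mu)"
  proof (rule fv_bound[OF _ ivv ivv2, of _ "18 * K3"])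
    have sf: "sigma_finite_measure (mu \<Otimes>\<^sub>M (mu \<Otimes>\<^sub>M mu))" by (rule prob_space_imp_sigma_finite[OF P3])
    have "case_prod (\<lambda>z w. h4 z (fst w) (fst (snd w)) (snd (snd w))) \<in> borel_measurable (mu \<Otimes>\<^sub>M (mu \<Otimes>\<^sub>M (mu \<Otimes>\<^sub>M mu)))"
      unfolding split_beta' by (rule h4_meas; rule mm; measurable)
    then show "h1 mu \<in> borel_measurable mu"
      unfolding h1_def[abs_def] by (rule sigma_finite_measure.borel_measurable_lebesgue_integral[OF sf])
    show "\<bar>h1 mu z\<bar> \<le> 18 * K3 * vv z" for z
    proof -
      have "\<bar>h1 mu z\<bar> \<le> (\<integral>w. norm (h4 z (fst w) (fst (snd w)) (snd (snd w))) \<partial>(mu \<Otimes>\<^sub>M (mu \<Otimes>\<^sub>M mu)))"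
        unfolding h1_def real_norm_def[symmetric] by (rule integral_norm_bound)
      also have "\<dots> \<le> (\<integral>w. (18 * vv z) * (vv (fst w) * (vv (fst (snd w)) * vv (snd (snd w)))) \<partial>(mu \<Otimes>\<^sub>M (mu \<Otimes>\<^sub>M mu)))"
      proof (rule integral_mono')
        show "integrable (mu \<Otimes>\<^sub>M (mu \<Otimes>\<^sub>M mu)) (\<lambda>w. (18 * vv z) * (vv (fst w) * (vv (fst (snd w)) * vv (snd (snd w)))))"
          using iV3 by simp
        show "norm (h4 z (fst w) (fst (snd w)) (snd (snd w))) \<le> (18 * vv z) * (vv (fst w) * (vv (fst (snd w)) * vv (snd (snd w))))" for w
          using h4_bound[of z "fst w" "fst (snd w)" "snd (snd w)"] by (simp add: mult.assoc)
        show "0 \<le> (18 * vv z) * (vv (fst w) * (vv (fst (snd w)) * vv (snd (snd w))))" for w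
          by (intro mult_nonneg_nonneg vv_nonneg) auto
      qed
      also have "\<dots> = 18 * K3 * vv z" unfolding K3_def by simp
      finally show ?thesis .
    qed
  qed (use K3 in simp)

  define K2 where "K2 = (\<integral>w. vv (fst w) * vv (snd w) \<partial>(mu \<Otimes>\<^sub>M mu))"
  have K2: "0 \<le> K2" unfolding K2_def by (intro integral_nonneg_AE AE_I2 mult_nonneg_nonneg vv_nonneg)
  have C: "finite_variance (mu \<Otimes>\<^sub>M mu) (\<lambda>w. h2 mu (fst w) (snd w))"
  proof (rule fv_bound[OF _ iV2, of _ "18 * K2"])
    have sf: "sigma_finite_measure (mu \<Otimes>\<^sub>M mu)" by (rule prob_space_imp_sigma_finite[OF P2])
    have "case_prod (\<lambda>x u. h4 (fst x) (snd x) (fst u) (snd u)) \<in> borel_measurable ((mu \<Otimes>\<^sub>M mu) \<Otimes>\<^sub>M (mu \<Otimes>\<^sub>M mu))"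
      unfolding split_beta' by (rule h4_meas; rule mm; measurable)
    then show "(\<lambda>w. h2 mu (fst w) (snd w)) \<in> borel_measurable (mu \<Otimes>\<^sub>M mu)"
      unfolding h2_def by (rule sigma_finite_measure.borel_measurable_lebesgue_integral[OF sf])
    show "integrable (mu \<Otimes>\<^sub>M mu) (\<lambda>w. (vv (fst w) * vv (snd w))\<^sup>2)"
      using iV2s by (simp add: power_mult_distrib)
    show "\<bar>h2 mu (fst x) (snd x)\<bar> \<le> 18 * K2 * (vv (fst x) * vv (snd x))" for x
    proof -
      have "\<bar>h2 mu (fst x) (snd x)\<bar> \<le> (\<integral>w. norm (h4 (fst x) (snd x) (fst w) (snd w)) \<partial>(mu \<Otimes>\<^sub>M mu))"
        unfolding h2_def real_norm_def[symmetric] by (rule integral_norm_bound)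
      also have "\<dots> \<le> (\<integral>w. (18 * (vv (fst x) * vv (snd x))) * (vv (fst w) * vv (snd w)) \<partial>(mu \<Otimes>\<^sub>M mu))"
      proof (rule integral_mono')
        show "integrable (mu \<Otimes>\<^sub>M mu) (\<lambda>w. (18 * (vv (fst x) * vv (snd x))) * (vv (fst w) * vv (snd w)))"
          using iV2 by simp
        show "norm (h4 (fst x) (snd x) (fst w) (snd w)) \<le> (18 * (vv (fst x) * vv (snd x))) * (vv (fst w) * vv (snd w))" for w
          using h4_bound[of "fst x" "snd x" "fst w" "snd w"] by (simp add: mult.assoc)
        show "0 \<le> (18 * (vv (fst x) * vv (snd x))) * (vv (fst w) * vv (snd w))" for w
          by (intro mult_nonneg_nonneg vv_nonneg) auto
      qed
      also have "\<dots> = 18 * K2 * (vv (fst x) * vv (snd x))" unfolding K2_def integral_mult_right_zero by (simp add: mult_ac)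
      finally show ?thesis .
    qed
  qed (use K2 in simp)
  show ?thesis using A B C by blast
qed

end
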